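(* Let $R$ be a subring of $\mathbb{C}$ with field of fractions $K\subseteq\mathbb{C}$, suppose the transcendence degree of $K$ over $\mathbb{Q}$ is $k<\infty$, and let $t_1,\dots,t_k\in R$ be algebraically independent over $\mathbb{Q}$. Let $f\colon R\to\mathbb{C}$ be additive and such that $q=f/j$ (i.e. $x\mapsto f(x)/x$), as a map from the semigroup $R^*$ to $\mathbb{C}$, is a generalized polynomial. If $f=0$ on the multiplicative semigroup $G$ generated by $t_1,\dots,t_k$, then $f=0$ on $R$.
   Context: Subrings contain $1$; the multiplicative semigroup generated by $t_1,\dots,t_k$ consists of all monomials $t_1^{i_1}\cdots t_k^{i_k}$ with $i_1,\dots,i_k\ge 0$ (including $1$). $R^*$ is the semigroup $R\setminus\{0\}$ under multiplication. For $f$ on an abelian semigroup $G$, $\Delta_g f(x)=f(x\cdot g)-f(x)$; $f$ is a generalized polynomial if for some $m$, $\Delta_{g_1}\cdots\Delta_{g_{m+1}}f=0$ for all $g_1,\dots,g_{m+1}$ in the semigroup. *)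

theory Defs
  imports Complex_Main
begin

definition subring_C :: "complex set \<Rightarrow> bool" where
  "subring_C R \<longleftrightarrow> 0 \<in> R \<and> 1 \<in> R \<and> (\<forall>x\<in>R. \<forall>y\<in>R. x + y \<in> R \<and> x * y \<in> R \<and> - x \<in> R)"

definition frac_field :: "complex set \<Rightarrow> complex set" where
  "frac_field R = {a / b | a b. a \<in> R \<and> b \<in> R \<and> b \<noteq> 0}"

definition monom_val :: "nat \<Rightarrow> (nat \<Rightarrow> complex) \<Rightarrow> (nat \<Rightarrow> nat) \<Rightarrow> complex" where
  "monom_val n t e = (\<Prod>i<n. t i ^ e i)"

definition alg_indep :: "nat \<Rightarrow> (nat \<Rightarrow> complex) \<Rightarrow> bool" where
  "alg_indep n t \<longleftrightarrow>
     (\<forall>S (c :: (nat \<Rightarrow> nat) \<Rightarrow> rat). finite S \<longrightarrow> (\<forall>e\<in>S. \<forall>i\<ge>n. e i = 0) \<longrightarrow>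
        (\<Sum>e\<in>S. of_rat (c e) * monom_val n t e) = 0 \<longrightarrow> (\<forall>e\<in>S. c e = 0))"

definition trdeg_eq :: "complex set \<Rightarrow> nat \<Rightarrow> bool" where
  "trdeg_eq K k \<longleftrightarrow>
     (\<exists>t. (\<forall>i<k. t i \<in> K) \<and> alg_indep k t) \<and>
     \<not> (\<exists>t. (\<forall>i<Suc k. t i \<in> K) \<and> alg_indep (Suc k) t)"

definition gen_semigroup :: "nat \<Rightarrow> (nat \<Rightarrow> complex) \<Rightarrow> complex set" where
  "gen_semigroup k t = {monom_val k t e | e. True}"

definition mdelta :: "complex \<Rightarrow> (complex \<Rightarrow> complex) \<Rightarrow> complex \<Rightarrow> complex" where
  "mdelta g f x = f (x * g) - f x"

fun mdeltas :: "complex list \<Rightarrow> (complex \<Rightarrow> complex) \<Rightarrow> complex \<Rightarrow> complex" where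
  "mdeltas [] f = f"
| "mdeltas (g # gs) f = mdelta g (mdeltas gs f)"

definition gen_poly :: "complex set \<Rightarrow> (complex \<Rightarrow> complex) \<Rightarrow> bool" where
  "gen_poly G f \<longleftrightarrow> (\<exists>m::nat. \<forall>gs. length gs = Suc m \<longrightarrow> set gs \<subseteq> G \<longrightarrow>
      (\<forall>x\<in>G. mdeltas gs f x = 0))"

end

theory Submission
  imports Defs
begin

lemma monom_upd: "k \<le> i \<Longrightarrow> monom_val k t (e(i := a)) = monom_val k t e"
  unfolding monom_val_def by (rule prod.cong) auto

lemma monom_Suc: "monom_val (Suc k) (t(k:=x)) e = monom_val k t e * x ^ e k"
proof -
  have "(\<Prod>i<k. (t(k:=x)) i ^ e i) = (\<Prod>i<k. t i ^ e i)" by (rule prod.cong) auto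
  thus ?thesis unfolding monom_val_def by simp
qed

lemma monom_add: "monom_val k t e1 * monom_val k t e2 = monom_val k t (\<lambda>i. e1 i + e2 i)"
  unfolding monom_val_def by (simp add: power_add prod.distrib)

lemma clear_denoms:
  assumes "finite S"
  shows "\<exists>D::int. D > 0 \<and> (\<forall>e\<in>S. \<exists>m::int. of_int D * (c e :: rat) = of_int m)"
  using assms
proof (induction S rule: finite_induct)
  case empty show ?case by (rule exI[of _ 1]) simp
next
  case (insert a S)
  then obtain D where D: "D > 0" "\<forall>e\<in>S. \<exists>m::int. of_int D * c e = of_int m" by blast
  obtain p q where pq: "quotient_of (c a) = (p, q)" by (cases "quotient_of (c a)")
  have q: "q > 0" using quotient_of_denom_pos[OF pq] .
  have ca: "c a = of_int p / of_int q" using quotient_of_div[OF pq] .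
  show ?case
  proof (rule exI[of _ "D * q"], intro conjI ballI)
    show "D * q > 0" using D q by simp
    fix e assume "e \<in> insert a S"
    then show "\<exists>m::int. of_int (D*q) * c e = of_int m"
    proof
      assume "e = a"
      have q0: "(of_int q :: rat) \<noteq> 0" using q by simp
      have "of_int (D*q) * c a = of_int D * (of_int q * (of_int p / of_int q))" using ca by simp
      also have "\<dots> = of_int (D * p)" using q0 by simp
      finally show ?thesis using \<open>e = a\<close> by blast
    next
      assume "e \<in> S"
      then obtain m where m: "of_int D * c e = of_int m" using D by blast
      have "of_int (D*q) * c e = of_int q * (of_int D * c e)" by simp
      also have "\<dots> = of_int (q * m)" using m by simp
      finally show ?thesis by blast
    qed
  qed
qed

lemma sub_closed:
  assumes "subring_C R"
  shows "0 \<in> R" "1 \<in> R" "x \<in> R \<Longrightarrow> y \<in> R \<Longrightarrow> x + y \<in> R"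
    "x \<in> R \<Longrightarrow> y \<in> R \<Longrightarrow> x * y \<in> R" "x \<in> R \<Longrightarrow> - x \<in> R"
  using assms unfolding subring_C_def by auto

lemma pow_in: "subring_C R \<Longrightarrow> x \<in> R \<Longrightarrow> x ^ n \<in> R"
  by (induction n) (auto intro: sub_closed)

lemma monom_in:
  assumes "subring_C R" "\<forall>i<k. t i \<in> R"
  shows "monom_val k t e \<in> R"
  using assms(2)
proof (induction k)
  case 0 then show ?case using sub_closed[OF assms(1)] by (simp add: monom_val_def)
next
  case (Suc k)
  then have "monom_val k t e \<in> R" by simp
  moreover have "t k ^ e k \<in> R" using Suc.prems pow_in[OF assms(1)] by simp
  ultimately show ?case unfolding monom_val_def using sub_closed(4)[OF assms(1)] by simp
qed

lemma t_nz:
  assumes ind: "alg_indep k t" and ik: "i < k"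
  shows "t i \<noteq> 0"
proof
  assume t0: "t i = 0"
  define d where "d = (\<lambda>j::nat. if j = i then 1 else (0::nat))"
  have "monom_val k t d = (\<Prod>j<k. if j = i then t j else 1)"
    unfolding monom_val_def by (rule prod.cong) (auto simp: d_def)
  also have "\<dots> = t i" using ik by simp
  finally have md: "monom_val k t d = 0" using t0 by simp
  have "\<forall>e\<in>{d}. \<forall>j\<ge>k. e j = 0" using ik by (auto simp: d_def)
  moreover have "(\<Sum>e\<in>{d}. of_rat ((\<lambda>_. 1::rat) e) * monom_val k t e) = 0" using md by simp
  moreover have "finite {d}" by simp
  moreover have H: "\<forall>S (c :: (nat \<Rightarrow> nat) \<Rightarrow> rat). finite S \<longrightarrow> (\<forall>e\<in>S. \<forall>i\<ge>k. e i = 0) \<longrightarrow>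
        (\<Sum>e\<in>S. of_rat (c e) * monom_val k t e) = 0 \<longrightarrow> (\<forall>e\<in>S. c e = 0)"
    using ind unfolding alg_indep_def .
  ultimately show False
    using spec[OF spec[OF H, of "{d}"], of "\<lambda>_. 1"] by simp
qed

lemma monom_nz: "alg_indep k t \<Longrightarrow> monom_val k t e \<noteq> 0"
  by (auto simp: monom_val_def dest: t_nz)

lemma f_props:
  fixes f :: "complex \<Rightarrow> complex"
  assumes R: "subring_C R" and add: "\<forall>x\<in>R. \<forall>y\<in>R. f (x + y) = f x + f y"
  shows f0: "f 0 = 0" and fint: "y \<in> R \<Longrightarrow> f (of_int m * y) = of_int m * f y"
    and intin: "y \<in> R \<Longrightarrow> of_int m * y \<in> R"
proof -
  have z: "0 \<in> R" using sub_closed[OF R] by simp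
  have "f (0 + 0) = f 0 + f 0" using add z by blast
  then show f0: "f 0 = 0" by simp
  have natin: "y \<in> R \<Longrightarrow> of_nat n * y \<in> R" for n y
    by (induction n) (auto simp: distrib_right intro: sub_closed[OF R])
  have fnat: "y \<in> R \<Longrightarrow> f (of_nat n * y) = of_nat n * f y" for n y
  proof (induction n)
    case 0 then show ?case using f0 by simp
  next
    case (Suc n)
    have "f (of_nat (Suc n) * y) = f (y + of_nat n * y)" by (simp add: distrib_right)
    also have "\<dots> = f y + f (of_nat n * y)" using add Suc natin by blast
    finally show ?case using Suc by (simp add: distrib_right)
  qed
  have fneg: "y \<in> R \<Longrightarrow> f (- y) = - f y" for y
  proof -
    assume y: "y \<in> R"
    have "f (y + - y) = f y + f (- y)" using add y sub_closed(5)[OF R y] by blast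
    then show ?thesis using f0 by (simp add: eq_neg_iff_add_eq_0 add.commute)
  qed
  show "y \<in> R \<Longrightarrow> of_int m * y \<in> R"
  proof (cases "m \<ge> 0")
    case True
    then have "m = int (nat m)" by simp
    then have "(of_int m :: complex) = of_nat (nat m)" by (metis of_int_of_nat_eq)
    then show "y \<in> R \<Longrightarrow> of_int m * y \<in> R" using natin by simp
  next
    case False
    then have "m = - int (nat (- m))" by simp
    then have "(of_int m :: complex) = - of_nat (nat (-m))" by (metis of_int_minus of_int_of_nat_eq)
    then show "y \<in> R \<Longrightarrow> of_int m * y \<in> R" using natin sub_closed(5)[OF R] by simp
  qed
  show "y \<in> R \<Longrightarrow> f (of_int m * y) = of_int m * f y"
  proof (cases "m \<ge> 0")
    case True
    then have "m = int (nat m)" by simp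
    then have "(of_int m :: complex) = of_nat (nat m)" by (metis of_int_of_nat_eq)
    then show "y \<in> R \<Longrightarrow> f (of_int m * y) = of_int m * f y" using fnat[of y "nat m"] by metis
  next
    case False
    then have "m = - int (nat (- m))" by simp
    show "y \<in> R \<Longrightarrow> f (of_int m * y) = of_int m * f y"
    proof -
      assume y: "y \<in> R"
      define n where "n = nat (- m)"
      have mm: "(of_int m :: complex) = - of_nat n" using \<open>m = - int (nat (- m))\<close> n_def
        by (metis of_int_minus of_int_of_nat_eq)
      have "of_int m * y = - (of_nat n * y)" using mm by simp
      then have "f (of_int m * y) = - f (of_nat n * y)" using fneg natin y by simp
      also have "\<dots> = - (of_nat n * f y)" using fnat y by simp
      also have "\<dots> = of_int m * f y" using mm by simp
      finally show ?thesis .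
    qed
  qed
qed

lemma f_sum:
  fixes f :: "complex \<Rightarrow> complex"
  assumes R: "subring_C R" and add: "\<forall>x\<in>R. \<forall>y\<in>R. f (x + y) = f x + f y"
  shows "finite S \<Longrightarrow> (\<forall>e\<in>S. y e \<in> R) \<Longrightarrow>
     f (\<Sum>e\<in>S. of_int (c e) * y e) = (\<Sum>e\<in>S. of_int (c e) * f (y e))"
proof (induction S rule: finite_induct)
  case empty then show ?case using f_props(1)[OF R add] by simp
next
  case (insert a S)
  have sR: "(\<Sum>e\<in>S. of_int (c e) * y e) \<in> R"
    using insert(1) insert.prems
  proof (induction S rule: finite_induct)
    case empty then show ?case using sub_closed[OF R] by simp
  next
    case (insert b T)
    then show ?case using f_props(3)[OF R add] sub_closed(3)[OF R] by simp
  qed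
  have aR: "of_int (c a) * y a \<in> R" using f_props(3)[OF R add] insert.prems by simp
  have "f (\<Sum>e\<in>insert a S. of_int (c e) * y e) = f (of_int (c a) * y a + (\<Sum>e\<in>S. of_int (c e) * y e))"
    using insert(1,2) by simp
  also have "\<dots> = f (of_int (c a) * y a) + f (\<Sum>e\<in>S. of_int (c e) * y e)" using add aR sR by blast
  also have "\<dots> = of_int (c a) * f (y a) + (\<Sum>e\<in>S. of_int (c e) * f (y e))"
    using insert f_props(2)[OF R add] by simp
  finally show ?case using insert(1,2) by simp
qed


lemma alg_rel:
  assumes R: "subring_C R" and tr: "trdeg_eq (frac_field R) k"
    and tR: "\<forall>i<k. t i \<in> R" and ind: "alg_indep k t"
    and xR: "x \<in> R" and x0: "x \<noteq> 0"
  shows "\<exists>S (c::(nat\<Rightarrow>nat)\<Rightarrow>int). finite S \<and>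
     (\<Sum>e\<in>S. of_int (c e) * (monom_val k t e * x ^ e k)) = 0 \<and>
     (\<Sum>e\<in>S. of_int (c e) * of_nat (e k) * (monom_val k t e * x ^ e k)) \<noteq> 0"
proof -
  define mv where "mv e = monom_val k t e * x ^ e k" for e
  define Rel where "Rel n \<longleftrightarrow> (\<exists>S (c::(nat\<Rightarrow>nat)\<Rightarrow>int). finite S \<and> S \<noteq> {} \<and> (\<forall>e\<in>S. c e \<noteq> 0)
      \<and> (\<forall>e\<in>S. e k \<le> n) \<and> (\<forall>e\<in>S. \<forall>i>k. e i = 0) \<and> (\<Sum>e\<in>S. of_int (c e) * mv e) = 0)" for n
  have exR: "\<exists>n. Rel n"
  proof -
    define t' where "t' = t(k:=x)"
    have inK: "\<forall>i<Suc k. t' i \<in> frac_field R"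
    proof (intro allI impI)
      fix i assume "i < Suc k"
      then have "t' i \<in> R" using tR xR unfolding t'_def by (cases "i = k") auto
      moreover have "1 \<in> R" using R unfolding subring_C_def by auto
      ultimately show "t' i \<in> frac_field R" unfolding frac_field_def by force
    qed
    then have "\<not> alg_indep (Suc k) t'" using tr unfolding trdeg_eq_def by blast
    then obtain S c where S: "finite S" "\<forall>e\<in>S. \<forall>i\<ge>Suc k. e i = 0"
      "(\<Sum>e\<in>S. of_rat (c e) * monom_val (Suc k) t' e) = 0" "\<exists>e\<in>S. c e \<noteq> 0"
      unfolding alg_indep_def by blast
    define S' where "S' = {e\<in>S. c e \<noteq> 0}"
    have fS': "finite S'" using S(1) unfolding S'_def by simp
    have sum': "(\<Sum>e\<in>S'. of_rat (c e) * mv e) = 0"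
    proof -
      have "(\<Sum>e\<in>S'. of_rat (c e) * mv e) = (\<Sum>e\<in>S. of_rat (c e) * mv e)"
        unfolding S'_def by (rule sum.mono_neutral_left) (use S(1) in auto)
      also have "\<dots> = 0" using S(3) unfolding mv_def t'_def monom_Suc .
      finally show ?thesis .
    qed
    obtain D where D: "D > 0" "\<forall>e\<in>S'. \<exists>m::int. of_int D * c e = of_int m"
      using clear_denoms[OF fS'] by blast
    then obtain cc where cc: "\<forall>e\<in>S'. of_int D * c e = of_int (cc e)" by metis
    have "Rel (\<Sum>e\<in>S'. e k)"
      unfolding Rel_def
    proof (intro exI[of _ S'] exI[of _ cc] conjI)
      show "finite S'" by fact
      show "S' \<noteq> {}" using S(4) unfolding S'_def by auto
      show "\<forall>e\<in>S'. cc e \<noteq> 0"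
      proof
        fix e assume e: "e \<in> S'"
        have "(of_int D :: rat) * c e \<noteq> 0" using e D(1) unfolding S'_def by simp
        then show "cc e \<noteq> 0" using cc e by force
      qed
      show "\<forall>e\<in>S'. e k \<le> (\<Sum>e\<in>S'. e k)" using fS' by (auto intro: member_le_sum)
      show "\<forall>e\<in>S'. \<forall>i>k. e i = 0" using S(2) unfolding S'_def by auto
      have "(\<Sum>e\<in>S'. of_int (cc e) * mv e) = (\<Sum>e\<in>S'. of_int D * (of_rat (c e) * mv e))"
      proof (rule sum.cong[OF refl])
        fix e assume e: "e \<in> S'"
        have "(of_int (cc e) :: complex) = of_rat (of_int (cc e))" by simp
        also have "\<dots> = of_rat (of_int D * c e)" using cc e by simp
        also have "\<dots> = of_int D * of_rat (c e)" by (simp add: of_rat_mult)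
        finally show "of_int (cc e) * mv e = of_int D * (of_rat (c e) * mv e)" by simp
      qed
      also have "\<dots> = 0" using sum' by (simp add: sum_distrib_left[symmetric])
      finally show "(\<Sum>e\<in>S'. of_int (cc e) * mv e) = 0" .
    qed
    then show ?thesis by blast
  qed
  define n0 where "n0 = (LEAST n. Rel n)"
  have Rn0: "Rel n0" unfolding n0_def using exR by (rule LeastI_ex)
  have minR: "\<And>n. n < n0 \<Longrightarrow> \<not> Rel n" unfolding n0_def by (rule not_less_Least)
  from Rn0 obtain S c where S: "finite S" "S \<noteq> {}" "\<forall>e\<in>S. c e \<noteq> 0" "\<forall>e\<in>S. e k \<le> n0"
     "\<forall>e\<in>S. \<forall>i>k. e i = 0" "(\<Sum>e\<in>S. of_int (c e) * mv e) = 0"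
    unfolding Rel_def by blast
  have n0pos: "n0 \<noteq> 0"
  proof
    assume "n0 = 0"
    then have ek: "\<forall>e\<in>S. e k = 0" using S(4) by auto
    have "(\<Sum>e\<in>S. of_rat ((\<lambda>e. of_int (c e)) e) * monom_val k t e) = (\<Sum>e\<in>S. of_int (c e) * mv e)"
      by (rule sum.cong) (auto simp: mv_def ek)
    then have s0: "(\<Sum>e\<in>S. of_rat ((\<lambda>e. of_int (c e)) e) * monom_val k t e) = 0" using S(6) by simp
    have sup: "\<forall>e\<in>S. \<forall>i\<ge>k. e i = 0"
    proof (intro ballI allI impI)
      fix e i assume e: "e \<in> S" and "k \<le> i"
      then show "e i = 0" using ek S(5) by (cases "i = k") auto
    qed
    have H: "\<forall>S (c :: (nat \<Rightarrow> nat) \<Rightarrow> rat). finite S \<longrightarrow> (\<forall>e\<in>S. \<forall>i\<ge>k. e i = 0) \<longrightarrow>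
        (\<Sum>e\<in>S. of_rat (c e) * monom_val k t e) = 0 \<longrightarrow> (\<forall>e\<in>S. c e = 0)"
      using ind unfolding alg_indep_def .
    have "\<forall>e\<in>S. (\<lambda>e. (of_int (c e) :: rat)) e = 0"
      using spec[OF spec[OF H, of S], of "\<lambda>e. of_int (c e)"] S(1) sup s0 by blast
    then show False using S(2,3) by auto
  qed
  then obtain n1 where n1: "n0 = Suc n1" by (cases n0) auto
  show ?thesis
  proof (intro exI[of _ S] exI[of _ c] conjI)
    show "finite S" by fact
    show "(\<Sum>e\<in>S. of_int (c e) * (monom_val k t e * x ^ e k)) = 0" using S(6) unfolding mv_def .
    show "(\<Sum>e\<in>S. of_int (c e) * of_nat (e k) * (monom_val k t e * x ^ e k)) \<noteq> 0"
    proof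
      assume Z: "(\<Sum>e\<in>S. of_int (c e) * of_nat (e k) * (monom_val k t e * x ^ e k)) = 0"
      define A where "A = {e\<in>S. 1 \<le> e k}"
      define h where "h e = e(k := e k - 1)" for e :: "nat \<Rightarrow> nat"
      define c2 where "c2 e = c (e(k := Suc (e k))) * int (Suc (e k))" for e
      have fA: "finite A" using S(1) unfolding A_def by simp
      have hinv: "\<And>e. e \<in> A \<Longrightarrow> (h e)(k := Suc (h e k)) = e" unfolding A_def h_def by auto
      have hk: "\<And>e. e \<in> A \<Longrightarrow> Suc (h e k) = e k" unfolding A_def h_def by auto
      have inj: "inj_on h A" by (metis hinv inj_onI)
      have Ane: "A \<noteq> {}"
      proof
        assume "A = {}"
        then have "\<forall>e\<in>S. e k \<le> n1" unfolding A_def by auto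
        then have "Rel n1" unfolding Rel_def using S by blast
        then show False using minR n1 by simp
      qed
      have mvh: "x * mv (h e) = mv e" if e: "e \<in> A" for e
      proof -
        have "monom_val k t (h e) = monom_val k t e" unfolding h_def by (rule monom_upd) simp
        moreover have "x * x ^ (h e k) = x ^ e k" using hk[OF e] by (metis power_Suc)
        ultimately show ?thesis unfolding mv_def by (simp add: mult_ac)
      qed
      have "x * (\<Sum>e'\<in>h ` A. of_int (c2 e') * mv e') = (\<Sum>e\<in>A. of_int (c2 (h e)) * (x * mv (h e)))"
        by (simp add: sum.reindex[OF inj] sum_distrib_left mult_ac)
      also have "\<dots> = (\<Sum>e\<in>A. of_int (c e) * of_nat (e k) * mv e)"
      proof (rule sum.cong[OF refl])
        fix e assume e: "e \<in> A"
        have "c2 (h e) = c e * int (e k)" unfolding c2_def using hinv[OF e] hk[OF e] by simp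
        then show "of_int (c2 (h e)) * (x * mv (h e)) = of_int (c e) * of_nat (e k) * mv e"
          using mvh[OF e] by simp
      qed
      also have "\<dots> = (\<Sum>e\<in>S. of_int (c e) * of_nat (e k) * mv e)"
        by (rule sum.mono_neutral_left) (auto simp: A_def S(1))
      also have "\<dots> = 0" using Z unfolding mv_def .
      finally have sz: "(\<Sum>e'\<in>h ` A. of_int (c2 e') * mv e') = 0" using x0 by simp
      have "Rel n1" unfolding Rel_def
      proof (intro exI[of _ "h ` A"] exI[of _ c2] conjI)
        show "finite (h ` A)" using fA by simp
        show "h ` A \<noteq> {}" using Ane by simp
        show "\<forall>e\<in>h ` A. c2 e \<noteq> 0"
        proof
          fix e' assume "e' \<in> h ` A"
          then obtain e where e: "e \<in> A" "e' = h e" by blast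
          have "c2 (h e) = c e * int (e k)" unfolding c2_def using hinv[OF e(1)] hk[OF e(1)] by simp
          moreover have "c e \<noteq> 0" "e k \<noteq> 0" using e(1) S(3) unfolding A_def by auto
          ultimately show "c2 e' \<noteq> 0" using e(2) by simp
        qed
        show "\<forall>e\<in>h ` A. e k \<le> n1" using S(4) n1 unfolding A_def h_def by auto
        show "\<forall>e\<in>h ` A. \<forall>i>k. e i = 0" using S(5) unfolding A_def h_def by auto
        show "(\<Sum>e\<in>h ` A. of_int (c2 e) * mv e) = 0" by fact
      qed
      then show False using minR n1 by simp
    qed
  qed
qed

definition fd :: "(nat \<Rightarrow> complex) \<Rightarrow> nat \<Rightarrow> complex" where
  "fd u n = u (Suc n) - u n"

lemma seq_lemma:
  fixes w :: "'a \<Rightarrow> complex" and d :: "'a \<Rightarrow> nat"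
  assumes fS: "finite S" and rel: "\<forall>n. (\<Sum>e\<in>S. w e * u (n + d e)) = 0"
    and s0: "(\<Sum>e\<in>S. w e) = 0" and s1: "(\<Sum>e\<in>S. w e * of_nat (d e)) \<noteq> 0"
    and van: "\<forall>n. (fd ^^ M) u n = 0"
  shows "u 1 = u 0"
proof -
  define Rl where "Rl v \<longleftrightarrow> (\<forall>n. (\<Sum>e\<in>S. w e * v (n + d e)) = 0)" for v
  have relfd: "Rl (fd v)" if "Rl v" for v
    unfolding Rl_def
  proof
    fix n
    have "(\<Sum>e\<in>S. w e * fd v (n + d e)) = (\<Sum>e\<in>S. w e * v (Suc n + d e)) - (\<Sum>e\<in>S. w e * v (n + d e))"
      by (simp add: fd_def right_diff_distrib sum_subtractf)
    moreover have "(\<Sum>e\<in>S. w e * v (Suc n + d e)) = 0" "(\<Sum>e\<in>S. w e * v (n + d e)) = 0"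
      using that unfolding Rl_def by blast+
    ultimately show "(\<Sum>e\<in>S. w e * fd v (n + d e)) = 0" by simp
  qed
  have relpow: "Rl ((fd ^^ j) u)" for j
    by (induction j) (use rel relfd in \<open>auto simp: Rl_def\<close>)
  have step: "\<forall>n. fd v n = 0" if r: "Rl v" and dd: "\<forall>n. fd (fd v) n = 0" for v
  proof -
    have const: "fd v n = fd v 0" for n
    proof (induction n)
      case 0 then show ?case by simp
    next
      case (Suc n)
      have "fd (fd v) n = 0" using dd by blast
      then have "fd v (Suc n) = fd v n" unfolding fd_def[of "fd v"] by simp
      then show ?case using Suc by simp
    qed
    have lin: "v n = v 0 + of_nat n * fd v 0" for n
    proof (induction n)
      case 0 then show ?case by simp
    next
      case (Suc n)
      have "v (Suc n) = v n + fd v n" by (simp add: fd_def)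
      then show ?case using Suc const[of n] by (simp add: distrib_right)
    qed
    have r0: "(\<Sum>e\<in>S. w e * v (0 + d e)) = 0" using r unfolding Rl_def by (rule spec)
    have "0 = (\<Sum>e\<in>S. w e * v (0 + d e))" using r0 by (rule sym)
    also have "\<dots> = (\<Sum>e\<in>S. v 0 * w e + fd v 0 * (w e * of_nat (d e)))"
    proof (rule sum.cong[OF refl])
      fix e assume "e \<in> S"
      have "v (0 + d e) = v 0 + of_nat (d e) * fd v 0" using lin[of "d e"] by simp
      then show "w e * v (0 + d e) = v 0 * w e + fd v 0 * (w e * of_nat (d e))"
        by (simp add: algebra_simps)
    qed
    also have "\<dots> = v 0 * (\<Sum>e\<in>S. w e) + fd v 0 * (\<Sum>e\<in>S. w e * of_nat (d e))"
      by (simp add: sum.distrib sum_distrib_left)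
    also have "\<dots> = fd v 0 * (\<Sum>e\<in>S. w e * of_nat (d e))" using s0 by simp
    finally have "fd v 0 = 0" using s1 by simp
    then show ?thesis using const by metis
  qed
  have down: "\<forall>n. (fd ^^ Suc j) u n = 0 \<Longrightarrow> \<forall>n. fd u n = 0" for j
  proof (induction j)
    case 0 then show ?case by simp
  next
    case (Suc j)
    have "\<forall>n. fd (fd ((fd ^^ j) u)) n = 0" using Suc.prems by simp
    then have "\<forall>n. fd ((fd ^^ j) u) n = 0" using step relpow by blast
    then show ?case using Suc.IH by simp
  qed
  have "\<forall>n. fd u n = 0"
  proof (cases M)
    case 0 then show ?thesis using van by (simp add: fd_def)
  next
    case (Suc j) then show ?thesis using van down by blast
  qed
  then show ?thesis using spec[of _ 0] unfolding fd_def by simp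
qed

lemma mdeltas_rep:
  "mdeltas (replicate j x) q (x ^ n * z) = (fd ^^ j) (\<lambda>n. q (x ^ n * z)) n"
proof (induction j arbitrary: n)
  case 0 then show ?case by simp
next
  case (Suc j)
  have e: "x ^ n * z * x = x ^ Suc n * z" by (simp add: mult_ac)
  show ?case using Suc[of n] Suc[of "Suc n"] by (simp add: mdelta_def fd_def e)
qed

lemma mdeltas_app: "mdeltas gs (mdelta g q) = mdeltas (gs @ [g]) q"
  by (induction gs) simp_all

lemma finish:
  fixes f :: "complex \<Rightarrow> complex"
  assumes R: "subring_C R" and tr: "trdeg_eq (frac_field R) k"
    and tR: "\<forall>i<k. t i \<in> R" and ind: "alg_indep k t"
    and add: "\<forall>x\<in>R. \<forall>y\<in>R. f (x + y) = f x + f y"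
    and gp: "\<forall>gs. length gs = M \<longrightarrow> set gs \<subseteq> R - {0} \<longrightarrow> (\<forall>x\<in>R - {0}. mdeltas gs (\<lambda>x. f x / x) x = 0)"
    and inv: "\<forall>g\<in>gen_semigroup k t. \<forall>y\<in>R - {0}. f (g*y) / (g*y) = f y / y"
    and f1: "f 1 = 0"
  shows "\<forall>x\<in>R. f x = 0"
proof
  fix x assume xR: "x \<in> R"
  have f0: "f 0 = 0" using f_props(1)[OF R add] .
  show "f x = 0"
  proof (cases "x = 0")
    case True then show ?thesis using f0 by simp
  next
    case False
    define q where "q y = f y / y" for y
    have fq: "f y = y * q y" if "y \<in> R" for y
      using that f0 unfolding q_def by (cases "y = 0") auto
    obtain S c where S: "finite S" "(\<Sum>e\<in>S. of_int (c e) * (monom_val k t e * x ^ e k)) = 0"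
       "(\<Sum>e\<in>S. of_int (c e) * of_nat (e k) * (monom_val k t e * x ^ e k)) \<noteq> 0"
      using alg_rel[OF R tr tR ind xR False] by blast
    have key: "(\<Sum>e\<in>S. of_int (c e) * (monom_val k t e * x ^ e k) * q (x ^ e k * z)) = 0"
      if z: "z \<in> R - {0}" for z
    proof -
      define y where "y e = monom_val k t e * (x ^ e k * z)" for e
      have yR: "\<forall>e\<in>S. y e \<in> R"
        using monom_in[OF R tR] pow_in[OF R xR] z sub_closed(4)[OF R] unfolding y_def by auto
      have "(\<Sum>e\<in>S. of_int (c e) * y e) = (\<Sum>e\<in>S. of_int (c e) * (monom_val k t e * x ^ e k)) * z"
        by (simp add: y_def sum_distrib_right sum_distrib_left mult_ac)
      then have "(\<Sum>e\<in>S. of_int (c e) * y e) = 0" using S(2) by simp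
      then have "0 = f (\<Sum>e\<in>S. of_int (c e) * y e)" using f0 by simp
      also have "\<dots> = (\<Sum>e\<in>S. of_int (c e) * f (y e))" using f_sum[OF R add S(1) yR] .
      also have "\<dots> = (\<Sum>e\<in>S. of_int (c e) * (monom_val k t e * x ^ e k) * q (x ^ e k * z) * z)"
      proof (rule sum.cong[OF refl])
        fix e assume e: "e \<in> S"
        have w: "x ^ e k * z \<in> R - {0}" using pow_in[OF R xR] z False sub_closed(4)[OF R] by auto
        have g: "monom_val k t e \<in> gen_semigroup k t" unfolding gen_semigroup_def by blast
        have "q (y e) = q (x ^ e k * z)" using inv g w unfolding q_def y_def by blast
        then show "of_int (c e) * f (y e) = of_int (c e) * (monom_val k t e * x ^ e k) * q (x ^ e k * z) * z"
          using fq[of "y e"] yR e unfolding y_def by (simp add: mult_ac)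
      qed
      also have "\<dots> = (\<Sum>e\<in>S. of_int (c e) * (monom_val k t e * x ^ e k) * q (x ^ e k * z)) * z"
        by (simp add: sum_distrib_right)
      finally show ?thesis using z by simp
    qed
    have inv_x: "q (x * z) = q z" if z: "z \<in> R - {0}" for z
    proof -
      define u where "u n = q (x ^ n * z)" for n
      have "u 1 = u 0"
      proof (rule seq_lemma[OF S(1)])
        show "\<forall>n. (\<Sum>e\<in>S. of_int (c e) * (monom_val k t e * x ^ e k) * u (n + e k)) = 0"
        proof
          fix n
          have zn: "x ^ n * z \<in> R - {0}" using pow_in[OF R xR] z False sub_closed(4)[OF R] by auto
          have "(\<Sum>e\<in>S. of_int (c e) * (monom_val k t e * x ^ e k) * u (n + e k))
              = (\<Sum>e\<in>S. of_int (c e) * (monom_val k t e * x ^ e k) * q (x ^ e k * (x ^ n * z)))"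
            unfolding u_def by (simp add: power_add mult_ac)
          then show "(\<Sum>e\<in>S. of_int (c e) * (monom_val k t e * x ^ e k) * u (n + e k)) = 0"
            using key[OF zn] by simp
        qed
        show "(\<Sum>e\<in>S. of_int (c e) * (monom_val k t e * x ^ e k)) = 0" by (rule S(2))
        have "(\<Sum>e\<in>S. of_int (c e) * (monom_val k t e * x ^ e k) * of_nat (e k))
            = (\<Sum>e\<in>S. of_int (c e) * of_nat (e k) * (monom_val k t e * x ^ e k))"
          by (simp add: mult_ac)
        then show "(\<Sum>e\<in>S. of_int (c e) * (monom_val k t e * x ^ e k) * of_nat (e k)) \<noteq> 0"
          using S(3) by simp
        show "\<forall>n. (fd ^^ M) u n = 0"
        proof
          fix n
          have zn: "x ^ n * z \<in> R - {0}" using pow_in[OF R xR] z False sub_closed(4)[OF R] by auto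
          have "length (replicate M x) = M \<longrightarrow> set (replicate M x) \<subseteq> R - {0} \<longrightarrow>
             (\<forall>y\<in>R - {0}. mdeltas (replicate M x) (\<lambda>x. f x / x) y = 0)"
            using gp by (rule spec)
          moreover have "set (replicate M x) \<subseteq> R - {0}" using xR False by auto
          ultimately have "mdeltas (replicate M x) (\<lambda>x. f x / x) (x ^ n * z) = 0"
            using zn by simp
          then show "(fd ^^ M) u n = 0" using mdeltas_rep[of M x "\<lambda>x. f x / x" n z]
            unfolding u_def q_def by simp
        qed
      qed
      then show ?thesis unfolding u_def by simp
    qed
    have "1 \<in> R - {0}" using sub_closed(2)[OF R] by simp
    then have "q x = q 1" using inv_x[of 1] by simp
    also have "\<dots> = 0" using f1 unfolding q_def by simp
    finally show ?thesis using fq[OF xR] by simp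
  qed
qed

lemma G_props:
  assumes R: "subring_C R" and tR: "\<forall>i<k. t i \<in> R" and ind: "alg_indep k t"
  shows "gen_semigroup k t \<subseteq> R - {0}" "1 \<in> gen_semigroup k t"
    "g \<in> gen_semigroup k t \<Longrightarrow> y \<in> gen_semigroup k t \<Longrightarrow> g * y \<in> gen_semigroup k t"
proof -
  show "gen_semigroup k t \<subseteq> R - {0}"
    unfolding gen_semigroup_def using monom_in[OF R tR] monom_nz[OF ind] by auto
  have "monom_val k t (\<lambda>_. 0) = 1" by (simp add: monom_val_def)
  then show "1 \<in> gen_semigroup k t" unfolding gen_semigroup_def by (metis (mono_tags, lifting) mem_Collect_eq)
  show "g \<in> gen_semigroup k t \<Longrightarrow> y \<in> gen_semigroup k t \<Longrightarrow> g * y \<in> gen_semigroup k t"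
    unfolding gen_semigroup_def using monom_add by blast
qed

lemma main:
  assumes R: "subring_C R" and tr: "trdeg_eq (frac_field R) k"
    and tR: "\<forall>i<k. t i \<in> R" and ind: "alg_indep k t"
  shows "\<forall>f::complex\<Rightarrow>complex. (\<forall>x\<in>R. \<forall>y\<in>R. f (x + y) = f x + f y) \<longrightarrow>
     (\<forall>gs. length gs = Suc m \<longrightarrow> set gs \<subseteq> R - {0} \<longrightarrow> (\<forall>x\<in>R - {0}. mdeltas gs (\<lambda>x. f x / x) x = 0)) \<longrightarrow>
     (\<forall>x\<in>gen_semigroup k t. f x = 0) \<longrightarrow> (\<forall>x\<in>R. f x = 0)"
proof (induction m)
  case 0
  show ?case
  proof (intro allI impI)
    fix f :: "complex \<Rightarrow> complex"
    assume add: "\<forall>x\<in>R. \<forall>y\<in>R. f (x + y) = f x + f y"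
      and gp: "\<forall>gs. length gs = Suc 0 \<longrightarrow> set gs \<subseteq> R - {0} \<longrightarrow> (\<forall>x\<in>R - {0}. mdeltas gs (\<lambda>x. f x / x) x = 0)"
      and vG: "\<forall>x\<in>gen_semigroup k t. f x = 0"
    have f1: "f 1 = 0" using vG G_props(2)[OF R tR ind] by blast
    have inv: "\<forall>g\<in>gen_semigroup k t. \<forall>y\<in>R - {0}. f (g*y) / (g*y) = f y / y"
    proof (intro ballI)
      fix g y assume g: "g \<in> gen_semigroup k t" and y: "y \<in> R - {0}"
      have "g \<in> R - {0}" using g G_props(1)[OF R tR ind] by blast
      moreover have "length [g] = Suc 0 \<longrightarrow> set [g] \<subseteq> R - {0} \<longrightarrow> (\<forall>x\<in>R - {0}. mdeltas [g] (\<lambda>x. f x / x) x = 0)"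
        using gp by (rule spec)
      ultimately have "mdeltas [g] (\<lambda>x. f x / x) y = 0" using y by simp
      then show "f (g*y) / (g*y) = f y / y" by (simp add: mdelta_def mult.commute)
    qed
    show "\<forall>x\<in>R. f x = 0" by (rule finish[OF R tr tR ind add gp inv f1])
  qed
next
  case (Suc m)
  show ?case
  proof (intro allI impI)
    fix f :: "complex \<Rightarrow> complex"
    assume add: "\<forall>x\<in>R. \<forall>y\<in>R. f (x + y) = f x + f y"
      and gp: "\<forall>gs. length gs = Suc (Suc m) \<longrightarrow> set gs \<subseteq> R - {0} \<longrightarrow> (\<forall>x\<in>R - {0}. mdeltas gs (\<lambda>x. f x / x) x = 0)"
      and vG: "\<forall>x\<in>gen_semigroup k t. f x = 0"
    have f1: "f 1 = 0" using vG G_props(2)[OF R tR ind] by blast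
    have inv: "\<forall>g\<in>gen_semigroup k t. \<forall>y\<in>R - {0}. f (g*y) / (g*y) = f y / y"
    proof (intro ballI)
      fix g y assume g: "g \<in> gen_semigroup k t" and y: "y \<in> R - {0}"
      have gR: "g \<in> R - {0}" using g G_props(1)[OF R tR ind] by blast
      define fg where "fg z = f (g * z) / g - f z" for z
      have addg: "\<forall>x\<in>R. \<forall>y\<in>R. fg (x + y) = fg x + fg y"
      proof (intro ballI)
        fix a b assume a: "a \<in> R" and b: "b \<in> R"
        have "f (g * (a + b)) = f (g * a) + f (g * b)"
          using add gR a b sub_closed(4)[OF R] by (simp add: distrib_left)
        then show "fg (a + b) = fg a + fg b" unfolding fg_def using add a b
          by (simp add: add_divide_distrib)
      qed
      have fgq: "(\<lambda>z. fg z / z) = mdelta g (\<lambda>x. f x / x)"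
        by (rule ext) (simp add: fg_def mdelta_def diff_divide_distrib mult.commute)
      have gpg: "\<forall>gs. length gs = Suc m \<longrightarrow> set gs \<subseteq> R - {0} \<longrightarrow> (\<forall>x\<in>R - {0}. mdeltas gs (\<lambda>x. fg x / x) x = 0)"
        unfolding fgq mdeltas_app using gp gR by auto
      have vGg: "\<forall>x\<in>gen_semigroup k t. fg x = 0"
        using vG G_props(3)[OF R tR ind g] unfolding fg_def by simp
      have "\<forall>x\<in>R. fg x = 0" using Suc.IH addg gpg vGg by blast
      then have "f (g * y) / g = f y" using y unfolding fg_def by simp
      then show "f (g*y) / (g*y) = f y / y" by (metis divide_divide_eq_left)
    qed
    show "\<forall>x\<in>R. f x = 0" by (rule finish[OF R tr tR ind add gp inv f1])
  qed
qed

theorem lemma4p1: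
  fixes R :: "complex set" and k :: nat and t :: "nat \<Rightarrow> complex"
    and f :: "complex \<Rightarrow> complex"
  assumes "subring_C R"
    and "trdeg_eq (frac_field R) k"
    and "\<forall>i<k. t i \<in> R"
    and "alg_indep k t"
    and "\<forall>x\<in>R. \<forall>y\<in>R. f (x + y) = f x + f y"
    and "gen_poly (R - {0}) (\<lambda>x. f x / x)"
    and "\<forall>x\<in>gen_semigroup k t. f x = 0"
  shows "\<forall>x\<in>R. f x = 0"
proof -
  obtain m where m: "\<forall>gs. length gs = Suc m \<longrightarrow> set gs \<subseteq> R - {0} \<longrightarrow>
      (\<forall>x\<in>R - {0}. mdeltas gs (\<lambda>x. f x / x) x = 0)"
    using assms(6) unfolding gen_poly_def by blast
  show ?thesis using main[OF assms(1-4), of m] assms(5,7) m by blast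
qed

end
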